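(* Let $(\mathcal V,\otimes,\lambda)$ be a colax Monoidal category and let $(C,\chi)$ be a homotopy coalgebra in $\mathcal V$. Then $(C,\chi)$ is the homotopy coalgebra associated with an ordinary (coassociative counital) coalgebra if and only if $C(I)=C(1)^{\otimes I}$ for all $I\in\mathbb N$ and $\chi^I_{n_1,\dots,n_I}=\lambda^{\sqcup_{i\in I}\mathbf n_i\to I}$ for all $I,n_1,\dots,n_I\in\mathbb N$, where $\sqcup_{i\in I}\mathbf n_i\to I$ is the non-decreasing map sending the $i$-th block $\mathbf n_i$ to $i$.
   Context: $\mathcal O_{sk}$ is the category with objects $\mathbf n=\{1<\dots<n\}$, $n\ge0$ (identified with $n\in\mathbb N$) and non-decreasing maps as morphisms; $\sqcup$ is ordered disjoint union. Composition is written in diagrammatic order. A colax Monoidal category $(\mathcal V,\otimes,\lambda)$ has tensor products $\otimes^{i\in I}X_i$ of finite ordered families and coherent structure morphisms $\lambda^\phi:\otimes^{j\in J}\otimes^{i\in\phi^{-1}j}X_i\to\otimes^{i\in I}X_i$ for $\phi:I\to J$ in $\mathcal O_{sk}$ (the opposite of a lax Monoidal structure on $\mathcal V^{op}$). A homotopy coalgebra $(C,\chi)$ is a lax Monoidal functor $(\mathcal O_{sk}^{op},\sqcup,\mathrm{id})\to(\mathcal V,\otimes,\lambda)$: objects $C(k)$, a functor $C:\mathcal O_{sk}^{op}\to\mathcal V$ (write $C(\phi^{op})$ for $\phi:I\to J$), morphisms $\chi^I_{N_1,\dots,N_I}:\otimes^{i\in I}C(N_i)\to C(\sqcup_iN_i)$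 natural in the $N_i$, with $\chi^{\mathbf1}_N=\mathrm{id}$ and, for every $\phi:I\to J$ and family $(N_i)_{i\in I}$, $(\otimes^{j\in J}\chi^{\phi^{-1}j})\chi^J=\lambda^\phi\chi^I$. An ordinary coalgebra is an object $C$ with $\Delta_I:C\to C^{\otimes I}$, $I\in\mathbb N$, $\Delta_{\mathbf1}=\mathrm{id}$, $\Delta_I=\Delta_J(\otimes^{j\in J}\Delta_{\phi^{-1}j})\lambda^\phi$ for all $\phi:I\to J$. Its associated homotopy coalgebra has $C(J)=C^{\otimes J}$, $C(\phi^{op})=(\otimes^{j\in J}\Delta_{\phi^{-1}j})\lambda^\phi$ and $\chi^I_{n_1,\dots,n_I}=\lambda^{\psi}$ where $\psi:\sqcup_{i\in I}\mathbf n_i\to I$ sends the $i$-th block to $i$. *)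

theory Defs
  imports Main
begin

text \<open>A morphism phi : I -> J of O_sk (I = {1<..<I}, J = {1<..<J}) is encoded as the list
  [phi 1, ..., phi I] of its values: a sorted list of length I with entries in {1..J}.\<close>

definition osk_map :: "nat list \<Rightarrow> nat \<Rightarrow> bool" where
  "osk_map phi J \<longleftrightarrow> sorted phi \<and> (\<forall>v\<in>set phi. 1 \<le> v \<and> v \<le> J)"

definition osk_id :: "nat \<Rightarrow> nat list" where
  "osk_id I = [1..<Suc I]"

text \<open>Diagrammatic composition phi ; psi (first phi, then psi).\<close>
definition osk_comp :: "nat list \<Rightarrow> nat list \<Rightarrow> nat list" where
  "osk_comp phi psi = map (\<lambda>v. psi ! (v - 1)) phi"

text \<open>The subfamily of a family xs indexed by the fibre phi^{-1} j (in increasing order).\<close>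
definition fib :: "nat list \<Rightarrow> 'a list \<Rightarrow> nat \<Rightarrow> 'a list" where
  "fib phi xs j = map snd (filter (\<lambda>p. fst p = j) (zip phi xs))"

text \<open>Restriction of phi : I -> J to (phi;psi)^{-1} k -> psi^{-1} k (both renumbered from 1).\<close>
definition osk_restr :: "nat list \<Rightarrow> nat list \<Rightarrow> nat \<Rightarrow> nat list" where
  "osk_restr phi psi k =
     map (\<lambda>v. v - length (filter (\<lambda>w. w < k) psi)) (filter (\<lambda>v. psi ! (v - 1) = k) phi)"

text \<open>Ordered disjoint union of maps phi_i : N_i -> M_i, giving sum N_i -> sum M_i.\<close>
definition osk_dunion :: "nat list \<Rightarrow> nat list list \<Rightarrow> nat list" where
  "osk_dunion Ms phis =
     concat (map (\<lambda>i. map (\<lambda>v. v + sum_list (take i Ms)) (phis ! i)) [0..<length phis])"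

definition block_map :: "nat list \<Rightarrow> nat list" where
  "block_map ns = concat (map2 (\<lambda>i n. replicate n i) [1..<Suc (length ns)] ns)"

text \<open>A category with objects all elements of 'o, arrows the elements of 'm satisfying c_arr,
  composition c_cmp written in diagrammatic order; tensor products of finite ordered families
  (lists) of objects and arrows; and lam J phi Xs = lambda^phi for phi : I -> J at the family Xs,
  a morphism  tens_j tens_{i in phi^{-1} j} X_i -> tens_i X_i.\<close>

record ('o, 'm) colax_cat =
  c_arr :: "'m \<Rightarrow> bool"
  c_dom :: "'m \<Rightarrow> 'o"
  c_cod :: "'m \<Rightarrow> 'o"
  c_cmp :: "'m \<Rightarrow> 'm \<Rightarrow> 'm"
  c_idt :: "'o \<Rightarrow> 'm"
  c_tens :: "'o list \<Rightarrow> 'o"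
  c_tensm :: "'m list \<Rightarrow> 'm"
  c_lam :: "nat \<Rightarrow> nat list \<Rightarrow> 'o list \<Rightarrow> 'm"

definition lam_src :: "('o, 'm) colax_cat \<Rightarrow> nat \<Rightarrow> nat list \<Rightarrow> 'o list \<Rightarrow> 'o" where
  "lam_src V J phi Xs = c_tens V (map (\<lambda>j. c_tens V (fib phi Xs j)) [1..<Suc J])"

definition category :: "('o, 'm) colax_cat \<Rightarrow> bool" where
  "category V \<longleftrightarrow>
    (\<forall>a. c_arr V (c_idt V a) \<and> c_dom V (c_idt V a) = a \<and> c_cod V (c_idt V a) = a) \<and>
    (\<forall>f g. c_arr V f \<and> c_arr V g \<and> c_cod V f = c_dom V g \<longrightarrow>
        c_arr V (c_cmp V f g) \<and> c_dom V (c_cmp V f g) = c_dom V f \<and>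
        c_cod V (c_cmp V f g) = c_cod V g) \<and>
    (\<forall>f. c_arr V f \<longrightarrow> c_cmp V (c_idt V (c_dom V f)) f = f \<and> c_cmp V f (c_idt V (c_cod V f)) = f) \<and>
    (\<forall>f g h. c_arr V f \<and> c_arr V g \<and> c_arr V h \<and> c_cod V f = c_dom V g \<and> c_cod V g = c_dom V h
        \<longrightarrow> c_cmp V (c_cmp V f g) h = c_cmp V f (c_cmp V g h))"

definition tensor_functors :: "('o, 'm) colax_cat \<Rightarrow> bool" where
  "tensor_functors V \<longleftrightarrow>
    (\<forall>fs. list_all (c_arr V) fs \<longrightarrow>
        c_arr V (c_tensm V fs) \<and> c_dom V (c_tensm V fs) = c_tens V (map (c_dom V) fs) \<and>
        c_cod V (c_tensm V fs) = c_tens V (map (c_cod V) fs)) \<and>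
    (\<forall>xs. c_tensm V (map (c_idt V) xs) = c_idt V (c_tens V xs)) \<and>
    (\<forall>fs gs. length fs = length gs \<and>
        (\<forall>i<length fs. c_arr V (fs ! i) \<and> c_arr V (gs ! i) \<and> c_cod V (fs ! i) = c_dom V (gs ! i))
        \<longrightarrow> c_tensm V (map2 (c_cmp V) fs gs) = c_cmp V (c_tensm V fs) (c_tensm V gs)) \<and>
    (\<forall>x. c_tens V [x] = x) \<and> (\<forall>f. c_tensm V [f] = f)"

definition colax_monoidal :: "('o, 'm) colax_cat \<Rightarrow> bool" where
  "colax_monoidal V \<longleftrightarrow> category V \<and> tensor_functors V \<and>
    \<comment> \<open>typing of lambda\<close>
    (\<forall>J phi Xs. osk_map phi J \<and> length Xs = length phi \<longrightarrow>
        c_arr V (c_lam V J phi Xs) \<and> c_dom V (c_lam V J phi Xs) = lam_src V J phi Xs \<and>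
        c_cod V (c_lam V J phi Xs) = c_tens V Xs) \<and>
    \<comment> \<open>naturality of lambda\<close>
    (\<forall>J phi fs. osk_map phi J \<and> length fs = length phi \<and> list_all (c_arr V) fs \<longrightarrow>
        c_cmp V (c_tensm V (map (\<lambda>j. c_tensm V (fib phi fs j)) [1..<Suc J]))
                (c_lam V J phi (map (c_cod V) fs))
        = c_cmp V (c_lam V J phi (map (c_dom V) fs)) (c_tensm V fs)) \<and>
    \<comment> \<open>lambda^{id} = id and lambda^{I -> 1} = id\<close>
    (\<forall>Xs. c_lam V (length Xs) (osk_id (length Xs)) Xs = c_idt V (c_tens V Xs)) \<and>
    (\<forall>Xs. c_lam V 1 (replicate (length Xs) 1) Xs = c_idt V (c_tens V Xs)) \<and>
    \<comment> \<open>coherence for I --phi--> J --psi--> K\<close>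
    (\<forall>phi psi J K Xs. osk_map phi J \<and> osk_map psi K \<and> length psi = J \<and> length Xs = length phi \<longrightarrow>
        c_cmp V (c_lam V K psi (map (\<lambda>j. c_tens V (fib phi Xs j)) [1..<Suc J])) (c_lam V J phi Xs)
        = c_cmp V (c_tensm V (map (\<lambda>k. c_lam V (count_list psi k) (osk_restr phi psi k)
                                          (fib (osk_comp phi psi) Xs k)) [1..<Suc K]))
                  (c_lam V K (osk_comp phi psi) Xs))"

text \<open>hC I = C(I); hCm phi J = C(phi^op) : C(J) -> C(I) for phi : I -> J;
  hchi ns = chi^I_{n_1,...,n_I} : tens_i C(n_i) -> C(sum n_i), where I = length ns.\<close>

record ('o, 'm) hcoalg =
  hC :: "nat \<Rightarrow> 'o"
  hCm :: "nat list \<Rightarrow> nat \<Rightarrow> 'm"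
  hchi :: "nat list \<Rightarrow> 'm"

definition homotopy_coalgebra :: "('o, 'm) colax_cat \<Rightarrow> ('o, 'm) hcoalg \<Rightarrow> bool" where
  "homotopy_coalgebra V H \<longleftrightarrow>
    \<comment> \<open>C is a functor O_sk^op -> V\<close>
    (\<forall>phi J. osk_map phi J \<longrightarrow> c_arr V (hCm H phi J) \<and> c_dom V (hCm H phi J) = hC H J \<and>
        c_cod V (hCm H phi J) = hC H (length phi)) \<and>
    (\<forall>I. hCm H (osk_id I) I = c_idt V (hC H I)) \<and>
    (\<forall>phi psi J K. osk_map phi J \<and> osk_map psi K \<and> length psi = J \<longrightarrow>
        hCm H (osk_comp phi psi) K = c_cmp V (hCm H psi K) (hCm H phi J)) \<and>
    \<comment> \<open>typing of chi\<close>
    (\<forall>ns. c_arr V (hchi H ns) \<and> c_dom V (hchi H ns) = c_tens V (map (hC H) ns) \<and>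
        c_cod V (hchi H ns) = hC H (sum_list ns)) \<and>
    \<comment> \<open>naturality of chi in the N_i\<close>
    (\<forall>Ns Ms phis. length Ns = length phis \<and> length Ms = length phis \<and>
        (\<forall>i<length phis. osk_map (phis ! i) (Ms ! i) \<and> length (phis ! i) = Ns ! i) \<longrightarrow>
        c_cmp V (c_tensm V (map2 (hCm H) phis Ms)) (hchi H Ns)
        = c_cmp V (hchi H Ms) (hCm H (osk_dunion Ms phis) (sum_list Ms))) \<and>
    \<comment> \<open>chi^1 = id\<close>
    (\<forall>n. hchi H [n] = c_idt V (hC H n)) \<and>
    \<comment> \<open>lax Monoidal functor equation\<close>
    (\<forall>phi J Ns. osk_map phi J \<and> length Ns = length phi \<longrightarrow>
        c_cmp V (c_tensm V (map (\<lambda>j. hchi H (fib phi Ns j)) [1..<Suc J]))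
                (hchi H (map (\<lambda>j. sum_list (fib phi Ns j)) [1..<Suc J]))
        = c_cmp V (c_lam V J phi (map (hC H) Ns)) (hchi H Ns))"

definition ordinary_coalgebra :: "('o, 'm) colax_cat \<Rightarrow> 'o \<Rightarrow> (nat \<Rightarrow> 'm) \<Rightarrow> bool" where
  "ordinary_coalgebra V C0 Delta \<longleftrightarrow>
    (\<forall>I. c_arr V (Delta I) \<and> c_dom V (Delta I) = C0 \<and> c_cod V (Delta I) = c_tens V (replicate I C0)) \<and>
    Delta 1 = c_idt V C0 \<and>
    (\<forall>phi J. osk_map phi J \<longrightarrow>
        Delta (length phi) =
          c_cmp V (c_cmp V (Delta J) (c_tensm V (map (\<lambda>j. Delta (count_list phi j)) [1..<Suc J])))
                  (c_lam V J phi (replicate (length phi) C0)))"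

definition is_assoc_hcoalg ::
    "('o, 'm) colax_cat \<Rightarrow> 'o \<Rightarrow> (nat \<Rightarrow> 'm) \<Rightarrow> ('o, 'm) hcoalg \<Rightarrow> bool" where
  "is_assoc_hcoalg V C0 Delta H \<longleftrightarrow>
    (\<forall>J. hC H J = c_tens V (replicate J C0)) \<and>
    (\<forall>phi J. osk_map phi J \<longrightarrow>
        hCm H phi J = c_cmp V (c_tensm V (map (\<lambda>j. Delta (count_list phi j)) [1..<Suc J]))
                              (c_lam V J phi (replicate (length phi) C0))) \<and>
    (\<forall>ns. hchi H ns = c_lam V (length ns) (block_map ns) (replicate (sum_list ns) C0))"

end

theory Submission
  imports Defs
begin
lemma count_filter: "count_list (filter P xs) x = (if P x then count_list xs x else 0)"
  by (induction xs) auto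
lemma sorted_split: "sorted xs \<Longrightarrow> \<forall>x\<in>set xs. a \<le> x \<Longrightarrow>
   xs = replicate (count_list xs a) a @ filter (\<lambda>x. a < x) xs"
proof (induction xs)
  case (Cons y ys)
  show ?case
  proof (cases "y = a")
    case True thus ?thesis using Cons by auto
  next
    case False
    hence "\<forall>x\<in>set (y#ys). a < x" using Cons.prems by force
    hence "count_list (y#ys) a = 0" "filter (\<lambda>x. a < x) (y#ys) = y#ys"
      by (auto simp: count_list_0_iff)
    thus ?thesis by simp
  qed
qed simp
lemma sorted_blocks: "sorted xs \<Longrightarrow> set xs \<subseteq> {a..<b} \<Longrightarrow>
   xs = concat (map (\<lambda>j. replicate (count_list xs j) j) [a..<b])"
proof (induction "b - a" arbitrary: a xs)
  case 0 thus ?case by auto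
next
  case (Suc n)
  hence ab: "a < b" by auto
  have 1: "xs = replicate (count_list xs a) a @ filter (\<lambda>x. a < x) xs"
    using sorted_split[of xs a] Suc.prems by (meson atLeastLessThan_iff subsetD)
  have 2: "filter (\<lambda>x. a < x) xs = concat (map (\<lambda>j. replicate (count_list (filter (\<lambda>x. a < x) xs) j) j) [Suc a..<b])"
    using Suc by (intro Suc.hyps) (auto simp: sorted_wrt_filter)
  have 3: "map (\<lambda>j. replicate (count_list (filter (\<lambda>x. a < x) xs) j) j) [Suc a..<b]
      = map (\<lambda>j. replicate (count_list xs j) j) [Suc a..<b]"
    by (auto simp: count_filter)
  have "[a..<b] = a # [Suc a..<b]" using ab by (simp add: upt_conv_Cons)
  thus ?case using 1 2 3 by simp
qed
lemma fib_rep: "length phi = n \<Longrightarrow> fib phi (replicate n c) j = replicate (count_list phi j) c"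
  unfolding fib_def by (induction phi arbitrary: n) (auto simp: )
lemma map2_rep1: "concat (map2 (\<lambda>i n. replicate n i) xs (replicate (length xs) (1::nat))) = xs"
  by (induction xs) auto
lemma block_id: "block_map (replicate J 1) = osk_id J"
  unfolding block_map_def osk_id_def using map2_rep1[of "[1..<Suc J]"] by (simp del: upt_Suc)

lemma osk_rep1: "osk_map (replicate n 1) 1"
  unfolding osk_map_def by auto

lemma comp_rep: "osk_map phi J \<Longrightarrow> osk_comp phi (replicate J 1) = replicate (length phi) 1"
  unfolding osk_map_def osk_comp_def
  by (induction phi) auto

lemma phi_blocks: "osk_map phi J \<Longrightarrow>
   phi = concat (map (\<lambda>j. replicate (count_list phi j) j) [1..<Suc J])"
  unfolding osk_map_def by (intro sorted_blocks) auto

lemma map2_same: "concat (map2 (\<lambda>i n. replicate n i) xs (map (count_list phi) xs))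
     = concat (map (\<lambda>j. replicate (count_list phi j) j) xs)"
  by (induction xs) auto

lemma block_counts: "block_map (map (count_list phi) [1..<Suc J])
    = concat (map (\<lambda>j. replicate (count_list phi j) j) [1..<Suc J])"
  unfolding block_map_def using map2_same[where phi=phi and xs="[1..<Suc J]"] by (simp del: upt_Suc)

lemma dunion_counts: "osk_dunion (replicate J 1) (map (\<lambda>n. replicate n 1) (map (count_list phi) [1..<Suc J]))
    = concat (map (\<lambda>j. replicate (count_list phi j) j) [1..<Suc J])"
proof -
  have "map (\<lambda>i. map (\<lambda>v. v + sum_list (take i (replicate J 1)))
           (map (\<lambda>n. replicate n 1) (map (count_list phi) [1..<Suc J]) ! i)) [0..<J]
      = map (\<lambda>i. replicate (count_list phi (Suc i)) (Suc i)) [0..<J]"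
    by (rule map_cong) (auto simp: nth_map min_def sum_list_replicate simp del: upt_Suc)
  also have "\<dots> = map (\<lambda>j. replicate (count_list phi j) j) (map Suc [0..<J])"
    by simp
  also have "map Suc [0..<J] = [1..<Suc J]" by (simp add: map_Suc_upt del: upt_Suc)
  finally show ?thesis unfolding osk_dunion_def by (simp del: upt_Suc)
qed

lemma len_counts: "osk_map phi J \<Longrightarrow> sum_list (map (count_list phi) [1..<Suc J]) = length phi"
proof -
  assume a: "osk_map phi J"
  have "length phi = length (concat (map (\<lambda>j. replicate (count_list phi j) j) [1..<Suc J]))"
    using phi_blocks[OF a] by simp
  also have "\<dots> = sum_list (map (count_list phi) [1..<Suc J])"
    by (simp add: length_concat comp_def del: upt_Suc)
  finally show ?thesis by simp
qed


lemma map2_rep: "map2 f xs (replicate (length xs) c) = map (\<lambda>x. f x c) xs"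
  by (induction xs) auto

theorem mainTheorem2:
  fixes V :: "('o, 'm) colax_cat" and H :: "('o, 'm) hcoalg"
  assumes "colax_monoidal V" and "homotopy_coalgebra V H"
  shows "(\<exists>C0 Delta. ordinary_coalgebra V C0 Delta \<and> is_assoc_hcoalg V C0 Delta H) \<longleftrightarrow>
         ((\<forall>I. hC H I = c_tens V (replicate I (hC H 1))) \<and>
          (\<forall>ns. hchi H ns = c_lam V (length ns) (block_map ns) (replicate (sum_list ns) (hC H 1))))"
proof -
  note cm = assms(1)[unfolded colax_monoidal_def]
  note cat = cm[THEN conjunct1, unfolded category_def]
  note tf = cm[THEN conjunct2, THEN conjunct1, unfolded tensor_functors_def]
  note lam_typ = cm[THEN conjunct2, THEN conjunct2, THEN conjunct1]
  note lam_id = cm[THEN conjunct2, THEN conjunct2, THEN conjunct2, THEN conjunct2, THEN conjunct1]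
  note idt_ax = cat[THEN conjunct1]
  note cmp_typ = cat[THEN conjunct2, THEN conjunct1]
  note idlaw = cat[THEN conjunct2, THEN conjunct2, THEN conjunct1]
  note assoc = cat[THEN conjunct2, THEN conjunct2, THEN conjunct2]
  note tensm_typ = tf[THEN conjunct1]
  note tens1 = tf[THEN conjunct2, THEN conjunct2, THEN conjunct2, THEN conjunct1]
  note hc = assms(2)[unfolded homotopy_coalgebra_def]
  note hCm_typ = hc[THEN conjunct1]
  note hCm_id = hc[THEN conjunct2, THEN conjunct1]
  note hCm_comp = hc[THEN conjunct2, THEN conjunct2, THEN conjunct1]
  note chi_nat = hc[THEN conjunct2, THEN conjunct2, THEN conjunct2, THEN conjunct2, THEN conjunct1]
  show ?thesis
  proof
    assume "\<exists>C0 Delta. ordinary_coalgebra V C0 Delta \<and> is_assoc_hcoalg V C0 Delta H"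
    then obtain C0 Delta where "is_assoc_hcoalg V C0 Delta H" by blast
    hence a: "\<forall>J. hC H J = c_tens V (replicate J C0)"
      "\<forall>ns. hchi H ns = c_lam V (length ns) (block_map ns) (replicate (sum_list ns) C0)"
      unfolding is_assoc_hcoalg_def by auto
    have "hC H 1 = C0" using a(1) tens1 by simp
    thus "(\<forall>I. hC H I = c_tens V (replicate I (hC H 1))) \<and>
          (\<forall>ns. hchi H ns = c_lam V (length ns) (block_map ns) (replicate (sum_list ns) (hC H 1)))"
      using a by simp
  next
    assume "(\<forall>I. hC H I = c_tens V (replicate I (hC H 1))) \<and>
          (\<forall>ns. hchi H ns = c_lam V (length ns) (block_map ns) (replicate (sum_list ns) (hC H 1)))"
    define C0 where "C0 = hC H 1"
    have hCd: "\<And>I. hC H I = c_tens V (replicate I C0)"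
      and chid: "\<And>ns. hchi H ns = c_lam V (length ns) (block_map ns) (replicate (sum_list ns) C0)"
      unfolding C0_def using \<open>(\<forall>I. hC H I = c_tens V (replicate I (hC H 1))) \<and> _\<close> by blast+
    define Delta where "Delta n = hCm H (replicate n 1) 1" for n
    have Dtyp: "c_arr V (Delta n) \<and> c_dom V (Delta n) = C0 \<and> c_cod V (Delta n) = c_tens V (replicate n C0)" for n
      using hCm_typ osk_rep1[of n] hCd[of n] C0_def unfolding Delta_def by auto
    have key: "hCm H phi J = c_cmp V (c_tensm V (map (\<lambda>j. Delta (count_list phi j)) [1..<Suc J]))
                              (c_lam V J phi (replicate (length phi) C0))" if ph: "osk_map phi J" for phi J
    proof -
      define Ns where "Ns = map (count_list phi) [1..<Suc J]"
      define phis where "phis = map (\<lambda>n. replicate n (1::nat)) Ns"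
      define Ms where "Ms = replicate J (1::nat)"
      have lens: "length Ns = J" "length phis = J" "length Ms = J" unfolding Ns_def phis_def Ms_def by auto
      have "\<forall>i<length phis. osk_map (phis ! i) (Ms ! i) \<and> length (phis ! i) = Ns ! i"
        unfolding phis_def Ms_def using osk_rep1 lens(1) by (auto simp del: upt_Suc)
      hence P: "length Ns = length phis \<and> length Ms = length phis \<and> (\<forall>i<length phis. osk_map (phis ! i) (Ms ! i) \<and> length (phis ! i) = Ns ! i)"
        using lens by simp
      have nat: "c_cmp V (c_tensm V (map2 (hCm H) phis Ms)) (hchi H Ns)
        = c_cmp V (hchi H Ms) (hCm H (osk_dunion Ms phis) (sum_list Ms))"
        using chi_nat[rule_format, OF P] .
      have sM: "sum_list Ms = J" unfolding Ms_def by (simp add: sum_list_replicate)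
      have du: "osk_dunion Ms phis = phi"
        unfolding Ms_def phis_def Ns_def dunion_counts using phi_blocks[OF ph] by simp
      have m2: "map2 (hCm H) phis Ms = map (\<lambda>j. Delta (count_list phi j)) [1..<Suc J]"
        unfolding Ms_def phis_def Ns_def Delta_def
        using map2_rep[where f="hCm H" and xs="map (\<lambda>n. replicate n (1::nat)) (map (count_list phi) [1..<Suc J])" and c=1]
        by (simp del: upt_Suc)
      have cN: "hchi H Ns = c_lam V J phi (replicate (length phi) C0)"
        unfolding chid using lens block_counts[of phi J] phi_blocks[OF ph] len_counts[OF ph]
        unfolding Ns_def by simp
      have cM: "hchi H Ms = c_idt V (hC H J)"
      proof -
        have "hchi H Ms = c_lam V J (osk_id J) (replicate J C0)"
          unfolding chid Ms_def block_id by (simp add: sum_list_replicate)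
        also have "\<dots> = c_idt V (c_tens V (replicate J C0))"
          using lam_id[rule_format, of "replicate J C0"] by simp
        finally show ?thesis using hCd[of J] by simp
      qed
      have ty: "c_arr V (hCm H phi J) \<and> c_dom V (hCm H phi J) = hC H J"
        using hCm_typ[rule_format, OF ph] by simp
      have "hCm H phi J = c_cmp V (c_idt V (hC H J)) (hCm H phi J)"
        using idlaw[rule_format, of "hCm H phi J"] ty by simp
      thus ?thesis using nat sM du m2 cN cM by simp
    qed
    have "ordinary_coalgebra V C0 Delta"
      unfolding ordinary_coalgebra_def
    proof (intro conjI allI impI)
      show "c_arr V (Delta I)" "c_dom V (Delta I) = C0" "c_cod V (Delta I) = c_tens V (replicate I C0)" for I
        using Dtyp by blast+
      show "Delta 1 = c_idt V C0"
        unfolding Delta_def C0_def using hCm_id[rule_format, of 1] by (simp add: osk_id_def)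
    next
      fix phi J assume ph: "osk_map phi J"
      let ?T = "c_tensm V (map (\<lambda>j. Delta (count_list phi j)) [1..<Suc J])"
      let ?L = "c_lam V J phi (replicate (length phi) C0)"
      have "Delta (length phi) = hCm H (osk_comp phi (replicate J 1)) 1"
        unfolding Delta_def comp_rep[OF ph] ..
      also have "\<dots> = c_cmp V (Delta J) (hCm H phi J)"
        using hCm_comp osk_rep1 ph unfolding Delta_def by simp
      also have "\<dots> = c_cmp V (Delta J) (c_cmp V ?T ?L)" using key[OF ph] by simp
      also have "\<dots> = c_cmp V (c_cmp V (Delta J) ?T) ?L"
      proof -
        have Tt: "c_arr V ?T \<and> c_dom V ?T = c_tens V (replicate J C0) \<and>
           c_cod V ?T = c_tens V (map (\<lambda>j. c_tens V (replicate (count_list phi j) C0)) [1..<Suc J])"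
          using tensm_typ[rule_format, of "map (\<lambda>j. Delta (count_list phi j)) [1..<Suc J]"] Dtyp
          by (simp add: list_all_iff o_def map_replicate_const del: upt_Suc)
        have Lt: "c_arr V ?L \<and> c_dom V ?L = c_tens V (map (\<lambda>j. c_tens V (replicate (count_list phi j) C0)) [1..<Suc J])"
          using lam_typ[rule_format, of phi J "replicate (length phi) C0"] ph
          by (simp add: lam_src_def fib_rep del: upt_Suc)
        have "c_cmp V (c_cmp V (Delta J) ?T) ?L = c_cmp V (Delta J) (c_cmp V ?T ?L)"
          by (rule assoc[rule_format]) (use Tt Lt Dtyp in auto)
        thus ?thesis by simp
      qed
      finally show "Delta (length phi) = c_cmp V (c_cmp V (Delta J) ?T) ?L" .
    qed
    moreover have "is_assoc_hcoalg V C0 Delta H"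
      unfolding is_assoc_hcoalg_def
    proof (intro conjI allI impI)
      show "hC H J = c_tens V (replicate J C0)" for J using hCd by simp
      show "hchi H ns = c_lam V (length ns) (block_map ns) (replicate (sum_list ns) C0)" for ns
        using chid by simp
    qed (rule key)
    ultimately show "\<exists>C0 Delta. ordinary_coalgebra V C0 Delta \<and> is_assoc_hcoalg V C0 Delta H" by blast
  qed
qed

end
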